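(* Let $U\subset\mathbb{R}^2$ be open, let $x:U\to\mathbb{R}^3$ be smooth, let $\xi:U\to S^2$ be a proper frontal such that the line congruence $\{x,\xi\}$ is normal, and let $\Omega$ be a tangent moving basis of $\xi$ with $D\xi=\Omega\Delta_\Omega^T$ and $\delta_\Omega=\det\Delta_\Omega$. Then the equation of principal surfaces is a multiple by $\delta_\Omega$ of the equation of developable surfaces; more precisely, $$\Delta_\Omega\,\mathbf{P}\,\mathrm{adj}(\boldsymbol{\mathcal{II}}_\Omega)^T\Delta_\Omega\,\boldsymbol{\mathcal{I}}_\Omega\,\Delta_\Omega^T=\delta_\Omega\,\mathbf{P}\,\mathrm{adj}(\boldsymbol{\mathcal{II}}_\Omega)\,\boldsymbol{\mathcal{I}}_\Omega\,\Delta_\Omega^T\quad\text{on }U,$$ where $\mathbf{P}=\begin{pmatrix}0&1\\-1&0\end{pmatrix}$.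
   Context: A frontal is a smooth map $f:U\to\mathbb{R}^3$ admitting locally a smooth unit vector field orthogonal to $f_{u_1},f_{u_2}$; proper means its singular set $\Sigma(f)$ (points where $f$ is not immersive) has empty interior. A tangent moving basis of $\xi$ is a smooth $\Omega=(w_1\ w_2):U\to M_{3\times2}(\mathbb{R})$ with linearly independent columns whose span contains $\xi_{u_1},\xi_{u_2}$; then $D\xi=\Omega\Delta_\Omega^T$ for a unique smooth $\Delta_\Omega$ and $\Sigma(\xi)=\delta_\Omega^{-1}(0)$. $\boldsymbol{\mathcal{I}}_\Omega=\Omega^T\Omega$, $\boldsymbol{\mathcal{II}}_\Omega=-\Omega^TDx$, $\mathrm{adj}$ is the adjugate. The congruence $\{x,\xi\}$ (lines through $x(u)$ in direction $\xi(u)$) is normal if there is a surface $S'$ whose normal lines are parallel to the lines of the congruence. For a curve $(u_1(t),u_2(t))$ in $U$, the equation of principal surfaces of a normal congruence is $(u_1',u_2')\,\Delta_\Omega\mathbf{P}\,\mathrm{adj}(\boldsymbol{\mathcal{II}}_\Omega)^T\Delta_\Omega\boldsymbol{\mathcal{I}}_\Omega\Delta_\Omega^T(u_1',u_2')^T=0$ (its solutions are the curves whose congruence surfaces $x+v\xi$ have, wherever $\Delta_\Omega^T(u_1',u_2')^T\neq0$, velocity direction extremizing $b\mapsto \frac{b^T\boldsymbol{\mathcal{II}}_\Omega\mathrm{adj}(\Delta_\Omega^T)b}{b^T\boldsymbol{\mathcal{I}}_\Omega b}$), and the equation of developable surfaces is $(u_1',u_2')\,\mathbf{P}\,\mathrm{adj}(\boldsymbol{\mathcal{II}}_\Omega)\boldsymbol{\mathcal{I}}_\Omega\Delta_\Omega^T(u_1',u_2')^T=0$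 (its solutions are the curves whose congruence surfaces are developable). *)

theory Defs
  imports "HOL-Analysis.Analysis"
begin

definition partial :: "(real^'n \<Rightarrow> 'b::real_normed_vector) \<Rightarrow> 'n \<Rightarrow> real^'n \<Rightarrow> 'b" where
  "partial f i u = frechet_derivative f (at u) (axis i 1)"

definition jac :: "(real^'n \<Rightarrow> real^'m) \<Rightarrow> real^'n \<Rightarrow> real^'n^'m" where
  "jac f u = (\<chi> r c. partial f c u $ r)"

fun Ck_on :: "nat \<Rightarrow> (real^'n \<Rightarrow> 'b::real_normed_vector) \<Rightarrow> (real^'n) set \<Rightarrow> bool" where
  "Ck_on 0 f U = continuous_on U f"
| "Ck_on (Suc k) f U = ((\<forall>u\<in>U. f differentiable (at u)) \<and> (\<forall>i. Ck_on k (partial f i) U))"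

definition smooth_on :: "(real^'n \<Rightarrow> 'b::real_normed_vector) \<Rightarrow> (real^'n) set \<Rightarrow> bool" where
  "smooth_on f U = (\<forall>k. Ck_on k f U)"

definition frontal :: "(real^2 \<Rightarrow> real^3) \<Rightarrow> (real^2) set \<Rightarrow> bool" where
  "frontal f U = (smooth_on f U \<and>
     (\<forall>u\<in>U. \<exists>V \<nu>. open V \<and> u \<in> V \<and> V \<subseteq> U \<and> smooth_on \<nu> V \<and>
        (\<forall>v\<in>V. norm (\<nu> v) = 1 \<and> (\<forall>i. \<nu> v \<bullet> partial f i v = 0))))"

definition singular_set :: "(real^2 \<Rightarrow> real^3) \<Rightarrow> (real^2) set \<Rightarrow> (real^2) set" where
  "singular_set f U = {u\<in>U. \<not> inj (frechet_derivative f (at u))}"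

definition proper_frontal :: "(real^2 \<Rightarrow> real^3) \<Rightarrow> (real^2) set \<Rightarrow> bool" where
  "proper_frontal f U = (frontal f U \<and> interior (singular_set f U) = {})"

definition tangent_moving_basis :: "(real^2 \<Rightarrow> real^3) \<Rightarrow> (real^2) set \<Rightarrow> (real^2 \<Rightarrow> real^2^3) \<Rightarrow> bool" where
  "tangent_moving_basis f U \<Omega> = (smooth_on \<Omega> U \<and>
     (\<forall>u\<in>U. (\<forall>c. \<Omega> u *v c = 0 \<longrightarrow> c = 0) \<and>
            (\<forall>i. partial f i u \<in> span {column 1 (\<Omega> u), column 2 (\<Omega> u)})))"

text \<open>Normal line congruence {x, xi}: there is a surface S' = x + lambda xi (lambda smooth)
  whose normal lines are parallel to xi, i.e. xi is orthogonal to the partials of S'.\<close>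
definition normal_congruence :: "(real^2 \<Rightarrow> real^3) \<Rightarrow> (real^2 \<Rightarrow> real^3) \<Rightarrow> (real^2) set \<Rightarrow> bool" where
  "normal_congruence x \<xi> U = (\<exists>lam::real^2 \<Rightarrow> real. smooth_on lam U \<and>
     (\<forall>u\<in>U. \<forall>i. \<xi> u \<bullet> partial (\<lambda>v. x v + lam v *\<^sub>R \<xi> v) i u = 0))"

definition adj2 :: "real^2^2 \<Rightarrow> real^2^2" where
  "adj2 A = (\<chi> i j. if i = 1 \<and> j = 1 then A $ 2 $ 2
                 else if i = 1 \<and> j = 2 then - A $ 1 $ 2
                 else if i = 2 \<and> j = 1 then - A $ 2 $ 1
                 else A $ 1 $ 1)"

definition Pmat :: "real^2^2" where
  "Pmat = (\<chi> i j. if i = 1 \<and> j = 2 then 1 else if i = 2 \<and> j = 1 then -1 else 0)"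

definition first_ff :: "(real^2 \<Rightarrow> real^2^3) \<Rightarrow> real^2 \<Rightarrow> real^2^2" where
  "first_ff \<Omega> u = transpose (\<Omega> u) ** \<Omega> u"

definition second_ff :: "(real^2 \<Rightarrow> real^2^3) \<Rightarrow> (real^2 \<Rightarrow> real^3) \<Rightarrow> real^2 \<Rightarrow> real^2^2" where
  "second_ff \<Omega> x u = - (transpose (\<Omega> u) ** jac x u)"

end

theory Submission
  imports Defs
begin

lemma adj_mult: "adj2 (A ** B) = adj2 B ** adj2 A"
  unfolding vec_eq_iff forall_2 matrix_matrix_mult_def sum_2 adj2_def by (simp add: algebra_simps)
lemma adj_tr: "transpose (adj2 A) = adj2 (transpose A)"
  unfolding vec_eq_iff forall_2 transpose_def adj2_def by simp
lemma adj_left: "adj2 A ** A = det A *\<^sub>R mat 1"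
  unfolding vec_eq_iff forall_2 matrix_matrix_mult_def sum_2 adj2_def det_2 mat_def by (simp add: algebra_simps)
lemma DP: "D ** Pmat = Pmat ** transpose (adj2 D)"
  unfolding vec_eq_iff forall_2 matrix_matrix_mult_def sum_2 adj2_def Pmat_def transpose_def by (simp add: algebra_simps)
lemma msr: fixes A :: "real^'n^'m" and B :: "real^'k^'n" shows "A ** (c *\<^sub>R B) = c *\<^sub>R (A ** B)" "(c *\<^sub>R A) ** B = c *\<^sub>R (A ** B)"
  by (auto simp: vec_eq_iff matrix_matrix_mult_def sum_distrib_left mult_ac)
lemma alg: fixes D II I :: "real^2^2" assumes "transpose (D ** II) = D ** II"
  shows "D ** Pmat ** transpose (adj2 II) ** D ** I ** transpose D = det D *\<^sub>R (Pmat ** adj2 II ** I ** transpose D)"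
proof -
  have "D ** Pmat ** transpose (adj2 II) ** D ** I ** transpose D
     = Pmat ** transpose (adj2 (D ** II)) ** D ** I ** transpose D"
    by (simp add: DP adj_mult matrix_transpose_mul matrix_mul_assoc)
  also have "\<dots> = Pmat ** adj2 II ** (adj2 D ** D) ** I ** transpose D"
    by (simp only: adj_tr assms, simp add: adj_mult matrix_mul_assoc)
  also have "\<dots> = det D *\<^sub>R (Pmat ** adj2 II ** I ** transpose D)"
    by (simp add: adj_left matrix_mul_assoc msr)
  finally show ?thesis .
qed
lemma partial_eq: "(f has_derivative f') (at u) \<Longrightarrow> partial f i u = f' (axis i 1)"
  unfolding partial_def by (metis frechet_derivative_at)

lemma line_deriv:
  fixes f :: "real^'n \<Rightarrow> 'b::real_normed_vector"
  assumes "f differentiable at (p + s *\<^sub>R axis i 1)"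
  shows "((\<lambda>s. f (p + s *\<^sub>R axis i 1)) has_vector_derivative partial f i (p + s *\<^sub>R axis i 1)) (at s within S)"
proof -
  let ?a = "axis i (1::real)"
  let ?D = "frechet_derivative f (at (p + s *\<^sub>R ?a))"
  have Df: "(f has_derivative ?D) (at (p + s *\<^sub>R ?a))" using assms frechet_derivative_works by blast
  have l: "((\<lambda>s. p + s *\<^sub>R ?a) has_derivative (\<lambda>h. h *\<^sub>R ?a)) (at s within S)"
    by (auto intro!: derivative_eq_intros)
  have "((\<lambda>s. f (p + s *\<^sub>R ?a)) has_derivative (\<lambda>h. ?D (h *\<^sub>R ?a))) (at s within S)"
    using has_derivative_compose[OF l Df] by simp
  moreover have "\<And>h. ?D (h *\<^sub>R ?a) = h *\<^sub>R ?D ?a"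
    using Df has_derivative_bounded_linear linear_scale bounded_linear.linear by blast
  ultimately show ?thesis unfolding has_vector_derivative_def partial_def by simp
qed

lemma vbound:
  fixes \<phi> :: "real \<Rightarrow> 'b::real_normed_vector"
  assumes "0 \<le> t" "\<And>s. s \<in> {0..t} \<Longrightarrow> (\<phi> has_vector_derivative \<phi>' s) (at s within {0..t})"
    "\<And>s. s \<in> {0..t} \<Longrightarrow> norm (\<phi>' s) \<le> B"
  shows "norm (\<phi> t - \<phi> 0) \<le> 3 * B * t"
proof -
  have B2: "norm (\<phi>' x - \<phi>' 0) \<le> 2 * B" if "x \<in> {0..t}" for x
    using assms(3)[OF that] assms(3)[of 0] assms(1) norm_triangle_ineq4[of "\<phi>' x" "\<phi>' 0"] by auto
  have "norm (\<phi> t - \<phi> 0 - (t - 0) *\<^sub>R \<phi>' 0) \<le> norm (t - 0) * (2 * B)"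
    by (rule vector_differentiable_bound_linearization[where S="{0..t}"])
       (use assms B2 in \<open>auto simp: closed_segment_eq_real_ivl\<close>)
  moreover have "norm (t *\<^sub>R \<phi>' 0) \<le> t * B" using assms(1) assms(3)[of 0] by (simp add: mult_left_mono)
  ultimately show ?thesis using assms(1) norm_triangle_sub[of "\<phi> t - \<phi> 0" "t *\<^sub>R \<phi>' 0"]
    by (simp add: algebra_simps)
qed

lemma schwarz_half:
  fixes f :: "real^'n \<Rightarrow> 'b::real_normed_vector"
  assumes U: "open U" "u \<in> U" and d0: "\<forall>v\<in>U. f differentiable at v"
    and d1: "\<forall>v\<in>U. partial f i differentiable at v"
    and c2: "continuous_on U (partial (partial f i) j)" and e: "\<epsilon> > 0"
  shows "\<exists>\<delta>>0. \<forall>t. 0 < t \<and> t < \<delta> \<longrightarrow>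
     norm (f (u + t *\<^sub>R axis j 1 + t *\<^sub>R axis i 1) - f (u + t *\<^sub>R axis i 1) - f (u + t *\<^sub>R axis j 1) + f u
       - (t * t) *\<^sub>R partial (partial f i) j u) \<le> 9 * \<epsilon> * (t * t)"
proof -
  let ?a = "axis i (1::real)" and ?b = "axis j (1::real)"
  define D where "D = partial (partial f i) j u"
  obtain r1 where r1: "r1 > 0" "ball u r1 \<subseteq> U" using U open_contains_ball by blast
  have "isCont (partial (partial f i) j) u" using c2 U continuous_on_eq_continuous_at by blast
  then obtain r2 where r2: "r2 > 0" "\<And>w. dist w u < r2 \<Longrightarrow> dist (partial (partial f i) j w) D < \<epsilon>"
    unfolding continuous_at_eps_delta D_def using e by blast
  define r where "r = min r1 r2"
  have inU: "u + s *\<^sub>R ?a + \<tau> *\<^sub>R ?b \<in> U" and cl: "norm (partial (partial f i) j (u + s *\<^sub>R ?a + \<tau> *\<^sub>R ?b) - D) \<le> \<epsilon>"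
    if "\<bar>s\<bar> + \<bar>\<tau>\<bar> < r" for s \<tau>
  proof -
    have "norm (s *\<^sub>R ?a + \<tau> *\<^sub>R ?b) \<le> \<bar>s\<bar> + \<bar>\<tau>\<bar>"
      by (metis norm_triangle_le norm_scaleR norm_axis_1 mult.right_neutral add_mono order_refl)
    hence dd: "dist (u + s *\<^sub>R ?a + \<tau> *\<^sub>R ?b) u < r" using that by (simp add: dist_norm add.assoc)
    thus "u + s *\<^sub>R ?a + \<tau> *\<^sub>R ?b \<in> U" using r1 r_def by (auto simp: dist_commute)
    show "norm (partial (partial f i) j (u + s *\<^sub>R ?a + \<tau> *\<^sub>R ?b) - D) \<le> \<epsilon>"
      using r2(2)[of "u + s *\<^sub>R ?a + \<tau> *\<^sub>R ?b"] dd r_def by (simp add: dist_norm)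
  qed
  show ?thesis
  proof (intro exI[of _ "r/2"] conjI allI impI)
    show "r/2 > 0" using r1 r2 r_def by simp
    fix t assume t: "0 < t \<and> t < r/2"
    define g where "g s = f ((u + t *\<^sub>R ?b) + s *\<^sub>R ?a) - f (u + s *\<^sub>R ?a) - (s * t) *\<^sub>R D" for s
    define g' where "g' s = partial f i ((u + t *\<^sub>R ?b) + s *\<^sub>R ?a) - partial f i (u + s *\<^sub>R ?a) - t *\<^sub>R D" for s
    have gd: "(g has_vector_derivative g' s) (at s within {0..t})" if s: "s \<in> {0..t}" for s
    proof -
      have "u + s *\<^sub>R ?a + t *\<^sub>R ?b \<in> U" "u + s *\<^sub>R ?a + 0 *\<^sub>R ?b \<in> U" using inU[of s t] inU[of s 0] s t by auto
      hence "f differentiable at ((u + t *\<^sub>R ?b) + s *\<^sub>R ?a)" "f differentiable at (u + s *\<^sub>R ?a)"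
        using d0 by (auto simp: algebra_simps)
      from line_deriv[OF this(1)] line_deriv[OF this(2)]
      show ?thesis unfolding g_def g'_def
        by (auto intro!: derivative_eq_intros)
    qed
    have gb: "norm (g' s) \<le> 3 * \<epsilon> * t" if s: "s \<in> {0..t}" for s
    proof -
      define h where "h \<tau> = partial f i ((u + s *\<^sub>R ?a) + \<tau> *\<^sub>R ?b) - \<tau> *\<^sub>R D" for \<tau>
      define h' where "h' \<tau> = partial (partial f i) j ((u + s *\<^sub>R ?a) + \<tau> *\<^sub>R ?b) - D" for \<tau>
      have "(h has_vector_derivative h' \<tau>) (at \<tau> within {0..t})" if "\<tau> \<in> {0..t}" for \<tau>
      proof -
        have "u + s *\<^sub>R ?a + \<tau> *\<^sub>R ?b \<in> U" using inU s t that by auto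
        hence "partial f i differentiable at ((u + s *\<^sub>R ?a) + \<tau> *\<^sub>R ?b)" using d1 by auto
        from line_deriv[OF this] show ?thesis unfolding h_def h'_def
          by (auto intro!: derivative_eq_intros)
      qed
      moreover have "norm (h' \<tau>) \<le> \<epsilon>" if "\<tau> \<in> {0..t}" for \<tau>
        using cl[of s \<tau>] s t that unfolding h'_def by auto
      ultimately have "norm (h t - h 0) \<le> 3 * \<epsilon> * t" using vbound[of t h h' \<epsilon>] t by auto
      moreover have "h t - h 0 = g' s" unfolding h_def g'_def by (simp add: algebra_simps)
      ultimately show ?thesis by simp
    qed
    have "norm (g t - g 0) \<le> 3 * (3 * \<epsilon> * t) * t" using vbound[of t g g' "3 * \<epsilon> * t"] gd gb t by auto
    moreover have "g t - g 0 = f (u + t *\<^sub>R ?b + t *\<^sub>R ?a) - f (u + t *\<^sub>R ?a) - f (u + t *\<^sub>R ?b) + f u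
       - (t * t) *\<^sub>R D" unfolding g_def by (simp add: algebra_simps)
    ultimately show "norm (f (u + t *\<^sub>R ?b + t *\<^sub>R ?a) - f (u + t *\<^sub>R ?a) - f (u + t *\<^sub>R ?b) + f u
       - (t * t) *\<^sub>R partial (partial f i) j u) \<le> 9 * \<epsilon> * (t * t)" unfolding D_def by (simp add: algebra_simps)
  qed
qed

lemma schwarz:
  fixes f :: "real^'n \<Rightarrow> 'b::real_normed_vector"
  assumes U: "open U" "u \<in> U" and d0: "\<forall>v\<in>U. f differentiable at v"
    and di: "\<forall>v\<in>U. partial f i differentiable at v"
    and dj: "\<forall>v\<in>U. partial f j differentiable at v"
    and ci: "continuous_on U (partial (partial f i) j)"
    and cj: "continuous_on U (partial (partial f j) i)"
  shows "partial (partial f i) j u = partial (partial f j) i u"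
proof -
  define D1 where "D1 = partial (partial f i) j u"
  define D2 where "D2 = partial (partial f j) i u"
  have le: "norm (D1 - D2) \<le> 18 * \<epsilon>" if e: "\<epsilon> > 0" for \<epsilon>
  proof -
    obtain d1 where d1: "d1 > 0" "\<forall>t. 0 < t \<and> t < d1 \<longrightarrow>
     norm (f (u + t *\<^sub>R axis j 1 + t *\<^sub>R axis i 1) - f (u + t *\<^sub>R axis i 1) - f (u + t *\<^sub>R axis j 1) + f u
       - (t * t) *\<^sub>R D1) \<le> 9 * \<epsilon> * (t * t)"
      using schwarz_half[OF U d0 di ci e] unfolding D1_def by blast
    obtain d2 where d2: "d2 > 0" "\<forall>t. 0 < t \<and> t < d2 \<longrightarrow>
     norm (f (u + t *\<^sub>R axis i 1 + t *\<^sub>R axis j 1) - f (u + t *\<^sub>R axis j 1) - f (u + t *\<^sub>R axis i 1) + f u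
       - (t * t) *\<^sub>R D2) \<le> 9 * \<epsilon> * (t * t)"
      using schwarz_half[OF U d0 dj cj e] unfolding D2_def by blast
    define t where "t = min d1 d2 / 2"
    have t: "0 < t" "t < d1" "t < d2" using d1 d2 t_def by auto
    define Q where "Q = f (u + t *\<^sub>R axis j 1 + t *\<^sub>R axis i 1) - f (u + t *\<^sub>R axis i 1) - f (u + t *\<^sub>R axis j 1) + f u"
    have Q2: "f (u + t *\<^sub>R axis i 1 + t *\<^sub>R axis j 1) - f (u + t *\<^sub>R axis j 1) - f (u + t *\<^sub>R axis i 1) + f u = Q"
      unfolding Q_def by (simp add: algebra_simps)
    have n1: "norm (Q - (t * t) *\<^sub>R D1) \<le> 9 * \<epsilon> * (t * t)" using d1(2) t unfolding Q_def by blast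
    have n2: "norm (Q - (t * t) *\<^sub>R D2) \<le> 9 * \<epsilon> * (t * t)" using d2(2) t Q2 by metis
    have "(t * t) *\<^sub>R (D1 - D2) = (Q - (t * t) *\<^sub>R D2) - (Q - (t * t) *\<^sub>R D1)" by (simp add: algebra_simps)
    hence "(t * t) * norm (D1 - D2) \<le> norm (Q - (t * t) *\<^sub>R D2) + norm (Q - (t * t) *\<^sub>R D1)"
      using norm_triangle_ineq4 t(1) by (metis norm_scaleR abs_of_pos mult_pos_pos)
    hence "(t * t) * norm (D1 - D2) \<le> (t * t) * (18 * \<epsilon>)" using n1 n2 by (simp add: algebra_simps)
    thus ?thesis using t(1) by (simp add: mult_le_cancel_left_pos)
  qed
  have "norm (D1 - D2) = 0"
  proof (rule ccontr)
    assume "norm (D1 - D2) \<noteq> 0"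
    hence p: "norm (D1 - D2) > 0" by simp
    from le[of "norm (D1 - D2) / 36"] p show False by simp
  qed
  thus ?thesis unfolding D1_def D2_def by simp
qed

lemma zero_deriv:
  assumes "open U" "v \<in> U" "\<forall>w\<in>U. g w = c" "(g has_derivative G) (at v)"
  shows "G h = 0"
proof -
  have "((\<lambda>_. c) has_derivative (\<lambda>_. 0)) (at v)" by simp
  hence "(g has_derivative (\<lambda>_. 0)) (at v)"
    by (rule has_derivative_transform_within_open[OF _ assms(1,2)]) (use assms(3) in auto)
  thus ?thesis using has_derivative_unique assms(4) by metis
qed

lemma C2:
  assumes "smooth_on f U"
  shows "\<forall>v\<in>U. f differentiable at v" "\<forall>i. \<forall>v\<in>U. partial f i differentiable at v"
    "\<forall>i j. continuous_on U (partial (partial f i) j)"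
proof -
  have "Ck_on (Suc (Suc 0)) f U" using assms unfolding smooth_on_def by blast
  thus "\<forall>v\<in>U. f differentiable at v" "\<forall>i. \<forall>v\<in>U. partial f i differentiable at v"
    "\<forall>i j. continuous_on U (partial (partial f i) j)" by auto
qed

lemma mneg: fixes A :: "real^'n^'m" and B :: "real^'k^'n" shows "A ** (- B) = - (A ** B)"
  by (simp add: vec_eq_iff matrix_matrix_mult_def sum_negf)

lemma tneg: "transpose (- A) = - transpose (A::real^'n^'m)"
  by (simp add: vec_eq_iff transpose_def)

lemma pd: "f differentiable at v \<Longrightarrow> (f has_derivative frechet_derivative f (at v)) (at v)"
  using frechet_derivative_works by blast

theorem theorem4p1:
  fixes U :: "(real^2) set" and x \<xi> :: "real^2 \<Rightarrow> real^3"
    and \<Omega> :: "real^2 \<Rightarrow> real^2^3" and \<Delta> :: "real^2 \<Rightarrow> real^2^2"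
  assumes "open U"
    and "smooth_on x U"
    and "\<forall>u\<in>U. norm (\<xi> u) = 1"
    and "proper_frontal \<xi> U"
    and "normal_congruence x \<xi> U"
    and "tangent_moving_basis \<xi> U \<Omega>"
    and "smooth_on \<Delta> U"
    and "\<forall>u\<in>U. jac \<xi> u = \<Omega> u ** transpose (\<Delta> u)"
  shows "\<forall>u\<in>U.
    \<Delta> u ** Pmat ** transpose (adj2 (second_ff \<Omega> x u)) ** \<Delta> u ** first_ff \<Omega> u ** transpose (\<Delta> u)
    = det (\<Delta> u) *\<^sub>R (Pmat ** adj2 (second_ff \<Omega> x u) ** first_ff \<Omega> u ** transpose (\<Delta> u))"
proof
  fix u assume uU: "u \<in> U"
  note U = assms(1)
  have sxi: "smooth_on \<xi> U" using assms(4) unfolding proper_frontal_def frontal_def by blast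
  obtain lam where lam: "smooth_on lam U"
     "\<forall>u\<in>U. \<forall>i. \<xi> u \<bullet> partial (\<lambda>v. x v + lam v *\<^sub>R \<xi> v) i u = 0"
    using assms(5) unfolding normal_congruence_def by blast
  note x2 = C2[OF assms(2)] and xi2 = C2[OF sxi] and l2 = C2[OF lam(1)]
  have unit: "\<xi> v \<bullet> \<xi> v = 1" if "v \<in> U" for v
    using assms(3) that by (metis norm_eq_1)
  have A: "\<xi> v \<bullet> partial \<xi> i v = 0" if v: "v \<in> U" for v i
  proof -
    have "((\<lambda>w. \<xi> w \<bullet> \<xi> w) has_derivative
       (\<lambda>h. \<xi> v \<bullet> frechet_derivative \<xi> (at v) h + frechet_derivative \<xi> (at v) h \<bullet> \<xi> v)) (at v)"
      using pd[of \<xi> v] xi2(1) v by (auto intro!: derivative_eq_intros)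
    from zero_deriv[OF U v _ this, of 1 "axis i 1"] unit
    show ?thesis unfolding partial_def by (simp add: inner_commute)
  qed
  have B: "\<xi> v \<bullet> partial x i v + partial lam i v = 0" if v: "v \<in> U" for v i
  proof -
    have "((\<lambda>v. x v + lam v *\<^sub>R \<xi> v) has_derivative
      (\<lambda>h. frechet_derivative x (at v) h + (lam v *\<^sub>R frechet_derivative \<xi> (at v) h
          + frechet_derivative lam (at v) h *\<^sub>R \<xi> v))) (at v)"
      using pd[of x v] pd[of \<xi> v] pd[of lam v] x2(1) xi2(1) l2(1) v by (auto intro!: derivative_eq_intros)
    from partial_eq[OF this, of i]
    have E: "partial (\<lambda>v. x v + lam v *\<^sub>R \<xi> v) i v = partial x i v + (lam v *\<^sub>R partial \<xi> i v + partial lam i v *\<^sub>R \<xi> v)"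
      unfolding partial_def by simp
    have "\<xi> v \<bullet> partial (\<lambda>v. x v + lam v *\<^sub>R \<xi> v) i v = 0" using lam(2) v by blast
    hence "\<xi> v \<bullet> (partial x i v + (lam v *\<^sub>R partial \<xi> i v + partial lam i v *\<^sub>R \<xi> v)) = 0"
      by (simp only: E)
    thus ?thesis using A[OF v, of i] unit[OF v] by (simp add: inner_add_right)
  qed
  have S: "partial \<xi> j u \<bullet> partial x i u = partial \<xi> i u \<bullet> partial x j u" for i j
  proof -
    have C: "partial \<xi> j u \<bullet> partial x i u = - (\<xi> u \<bullet> partial (partial x i) j u + partial (partial lam i) j u)" for i j
    proof -
      have "((\<lambda>v. \<xi> v \<bullet> partial x i v + partial lam i v) has_derivative
        (\<lambda>h. (\<xi> u \<bullet> frechet_derivative (partial x i) (at u) h + frechet_derivative \<xi> (at u) h \<bullet> partial x i u)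
           + frechet_derivative (partial lam i) (at u) h)) (at u)"
        using pd[of \<xi> u] pd[of "partial x i" u] pd[of "partial lam i" u] xi2(1) x2(2) l2(2) uU by (auto intro!: derivative_eq_intros)
      from zero_deriv[OF U uU _ this, of 0 "axis j 1"] B
      show ?thesis unfolding partial_def by simp
    qed
    have "partial (partial x i) j u = partial (partial x j) i u"
      by (rule schwarz[OF U uU]) (use x2 in auto)
    moreover have "partial (partial lam i) j u = partial (partial lam j) i u"
      by (rule schwarz[OF U uU]) (use l2 in auto)
    ultimately show ?thesis using C[of j i] C[of i j] by simp
  qed
  have sym: "transpose (transpose (jac \<xi> u) ** jac x u) = transpose (jac \<xi> u) ** jac x u"
    using S by (simp add: vec_eq_iff transpose_def matrix_matrix_mult_def jac_def inner_vec_def mult.commute)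
  have "transpose (jac \<xi> u) ** jac x u = - (\<Delta> u ** second_ff \<Omega> x u)"
    using assms(8) uU by (simp add: second_ff_def mneg matrix_transpose_mul matrix_mul_assoc)
  with sym have "transpose (\<Delta> u ** second_ff \<Omega> x u) = \<Delta> u ** second_ff \<Omega> x u"
    by (metis tneg minus_minus)
  from alg[OF this] show "\<Delta> u ** Pmat ** transpose (adj2 (second_ff \<Omega> x u)) ** \<Delta> u ** first_ff \<Omega> u ** transpose (\<Delta> u)
    = det (\<Delta> u) *\<^sub>R (Pmat ** adj2 (second_ff \<Omega> x u) ** first_ff \<Omega> u ** transpose (\<Delta> u))" .
qed

end
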